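(* Let $(M,\Sigma)$ be a measurable space, $r\ge1$, and $\mu_1,\dots,\mu_r$ non-atomic countably additive finite measures on $\Sigma$. Let $(H_k)_{k\ge1}$ be measurable sets and $(h_k)_{k\ge1}$ indices in $\{1,\dots,r\}$ such that for every $k$: $H_k\subseteq M\setminus\bigcup_{i=1}^{k-1}H_i$, $H_k$ has a gentleman's solution (a partition $H_k=F_1\sqcup\dots\sqcup F_r$ with $\mu_i(F_i)\le\mu_i(F_j)$ for all $i,j$), and $\mu_{h_k}(H_k)\ge 2^{-(r-1)}\mu_{h_k}\bigl(M\setminus\bigcup_{i=1}^{k-1}H_i\bigr)$. Let $\ell\in\{1,\dots,r\}$ be an index with $h_k=\ell$ for infinitely many $k$, and let $M_\infty=M\setminus\bigsqcup_{i=1}^\infty H_i$. Then $\mu_\ell(M_\infty)=0$. *)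

theory Defs
  imports "HOL-Analysis.Analysis"
begin

definition nonatomic :: "'a measure \<Rightarrow> bool" where
  "nonatomic m \<longleftrightarrow>
     (\<forall>A\<in>sets m. 0 < emeasure m A \<longrightarrow>
        (\<exists>B\<in>sets m. B \<subseteq> A \<and> 0 < emeasure m B \<and> emeasure m B < emeasure m A))"

definition gentleman_solution ::
  "'a measure \<Rightarrow> nat \<Rightarrow> (nat \<Rightarrow> 'a measure) \<Rightarrow> 'a set \<Rightarrow> bool" where
  "gentleman_solution N r \<mu> H \<longleftrightarrow>
     (\<exists>F :: nat \<Rightarrow> 'a set.
        (\<forall>i\<in>{1..r}. F i \<in> sets N) \<and>
        disjoint_family_on F {1..r} \<and>
        (\<Union>i\<in>{1..r}. F i) = H \<and>
        (\<forall>i\<in>{1..r}. \<forall>j\<in>{1..r}. measure (\<mu> i) (F i) \<le> measure (\<mu> i) (F j)))"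

end

theory Submission
  imports Defs
begin

theorem corollary4:
  fixes N :: "'a measure" and r :: nat and \<mu> :: "nat \<Rightarrow> 'a measure"
    and H :: "nat \<Rightarrow> 'a set" and h :: "nat \<Rightarrow> nat" and l :: nat
  assumes r: "r \<ge> 1"
    and meas_sets: "\<And>i. i \<in> {1..r} \<Longrightarrow> sets (\<mu> i) = sets N"
    and finite: "\<And>i. i \<in> {1..r} \<Longrightarrow> finite_measure (\<mu> i)"
    and nonatomic: "\<And>i. i \<in> {1..r} \<Longrightarrow> nonatomic (\<mu> i)"
    and H_sets: "\<And>k. k \<ge> 1 \<Longrightarrow> H k \<in> sets N"
    and h_range: "\<And>k. k \<ge> 1 \<Longrightarrow> h k \<in> {1..r}"
    and H_sub: "\<And>k. k \<ge> 1 \<Longrightarrow> H k \<subseteq> space N - (\<Union>i\<in>{1..<k}. H i)"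
    and H_gent: "\<And>k. k \<ge> 1 \<Longrightarrow> gentleman_solution N r \<mu> (H k)"
    and H_big: "\<And>k. k \<ge> 1 \<Longrightarrow>
       measure (\<mu> (h k)) (H k) \<ge>
         (1/2) ^ (r - 1) * measure (\<mu> (h k)) (space N - (\<Union>i\<in>{1..<k}. H i))"
    and l_range: "l \<in> {1..r}"
    and l_inf: "infinite {k. k \<ge> 1 \<and> h k = l}"
  shows "measure (\<mu> l) (space N - (\<Union>i\<in>{1..}. H i)) = 0"
proof -
  let ?m = "\<mu> l"
  let ?c = "(1/2::real) ^ (r - 1)"
  let ?Minf = "space N - (\<Union>i\<in>{1..}. H i)"
  interpret fm: finite_measure ?m using finite l_range by blast
  have sl: "sets ?m = sets N" using meas_sets l_range by blast
  have sp: "space ?m = space N" using sets_eq_imp_space_eq[OF sl] .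
  have Hs: "H k \<in> sets ?m" if "k \<ge> 1" for k using H_sets[OF that] sl by simp
  have Rs: "space N - (\<Union>i\<in>{1..<k}. H i) \<in> sets ?m" for k
  proof -
    have "(\<Union>i\<in>{1..<k}. H i) \<in> sets ?m" using Hs by (intro sets.finite_UN) auto
    then show ?thesis using sp by (metis sets.Diff sets.top)
  qed
  have Ms: "?Minf \<in> sets ?m"
  proof -
    have "(\<Union>i\<in>{1..}. H i) \<in> sets ?m" using Hs by (intro sets.countable_UN'') auto
    then show ?thesis using sp by (metis sets.Diff sets.top)
  qed
  have disj: "disjoint_family (\<lambda>i. H (Suc i))"
    unfolding disjoint_family_on_def
  proof (intro ballI impI)
    fix i j :: nat assume "i \<noteq> j"
    show "H (Suc i) \<inter> H (Suc j) = {}"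
    proof (cases "i < j")
      case True then show ?thesis using H_sub[of "Suc j"] by fastforce
    next
      case False then have "j < i" using \<open>i \<noteq> j\<close> by simp
      then show ?thesis using H_sub[of "Suc i"] by fastforce
    qed
  qed
  have "(\<lambda>i. measure ?m (H (Suc i))) sums measure ?m (\<Union>i. H (Suc i))"
    using Hs disj by (intro fm.finite_measure_UNION) auto
  then have "(\<lambda>i. measure ?m (H (Suc i))) \<longlonglongrightarrow> 0"
    using summable_LIMSEQ_zero sums_summable by blast
  then have lim: "(\<lambda>k. measure ?m (H k)) \<longlonglongrightarrow> 0"
    by (rule LIMSEQ_imp_Suc)
  have cpos: "?c > 0" by simp
  show ?thesis
  proof (rule ccontr)
    assume ne: "measure ?m ?Minf \<noteq> 0"
    then have xpos: "measure ?m ?Minf > 0" using measure_nonneg[of ?m ?Minf]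
      by linarith
    have "?c * measure ?m ?Minf > 0" using xpos cpos by simp
    then have "eventually (\<lambda>k. dist (measure ?m (H k)) 0 < ?c * measure ?m ?Minf) sequentially"
      using lim tendstoD by blast
    then obtain K where K: "\<And>k. k \<ge> K \<Longrightarrow> measure ?m (H k) < ?c * measure ?m ?Minf"
      unfolding eventually_sequentially by auto
    obtain k where k: "k \<in> {k. k \<ge> 1 \<and> h k = l}" "k \<ge> K"
      using l_inf infinite_nat_iff_unbounded_le by blast
    have "?Minf \<subseteq> space N - (\<Union>i\<in>{1..<k}. H i)" by auto
    then have "measure ?m ?Minf \<le> measure ?m (space N - (\<Union>i\<in>{1..<k}. H i))"
      using Rs by (intro fm.finite_measure_mono) auto
    then have "?c * measure ?m ?Minf \<le> ?c * measure ?m (space N - (\<Union>i\<in>{1..<k}. H i))"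
      using cpos by simp
    also have "\<dots> \<le> measure ?m (H k)" using H_big[of k] k by simp
    finally show False using K[OF k(2)] by simp
  qed
qed

end
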